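(* Consider the system $$\begin{bmatrix}\dot q\\ \dot p\end{bmatrix}=J\begin{bmatrix}\frac{\partial H}{\partial q}(q,p)\\ \frac{\partial H}{\partial p}(q,p)\end{bmatrix},\qquad J=\begin{bmatrix}0 & B_s^T\\ -B_s & -B_dRB_d^T\end{bmatrix},\quad (q,p)\in\mathbb{R}^{M_s}\times\mathbb{R}^{N}.$$ A differentiable function $C(q,p)$ is a Casimir function, i.e. $\begin{bmatrix}\frac{\partial^T C}{\partial q}(q,p) & \frac{\partial^T C}{\partial p}(q,p)\end{bmatrix}J=0$ for all $(q,p)$, if and only if for all $(q,p)$ $$\tfrac{\partial C}{\partial p}(q,p)\in\operatorname{span}\mathbb{1},\qquad \tfrac{\partial C}{\partial q}(q,p)\in\ker B_s.$$
   Context: Mass-spring-damper setting: a directed graph with $N$ vertices whose edges are split into $M_s$ spring edges and $M_d$ damper edges; its incidence matrix is $B=[B_s\ B_d]$ ($N\times(M_s+M_d)$, entry $1$ if the edge originates at the vertex, $-1$ if it points towards it, $0$ otherwise). Standing assumption: the graph is connected, equivalently $\ker B_s^T\cap\ker B_d^T=\operatorname{span}\mathbb{1}$, $\mathbb{1}\in\mathbb{R}^N$ the all-ones vector. $R$ is the $M_d\times M_d$ diagonal matrix of positive damping constants. $\frac{\partial C}{\partial q}$ denotes the column gradient and $\frac{\partial^T C}{\partial q}$ the row gradient. *)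

theory Defs
  imports "HOL-Analysis.Analysis"
begin

text \<open>Incidence matrix of a directed graph (vertices indexed by 'n, edges by 'e):
  every column (edge) has exactly one entry 1 (origin), one entry -1 (target), all
  other entries 0.\<close>
definition incidence_matrix :: "real^'e^'n \<Rightarrow> bool" where
  "incidence_matrix B \<longleftrightarrow>
     (\<forall>j. \<exists>u v. u \<noteq> v \<and> B $ u $ j = 1 \<and> B $ v $ j = -1 \<and>
               (\<forall>w. w \<noteq> u \<and> w \<noteq> v \<longrightarrow> B $ w $ j = 0))"

definition grad_q :: "((real^'s) \<times> (real^'n) \<Rightarrow> real) \<Rightarrow> real^'s \<Rightarrow> real^'n \<Rightarrow> real^'s" where
  "grad_q C q p = (\<chi> i. frechet_derivative C (at (q, p)) (axis i 1, 0))"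

definition grad_p :: "((real^'s) \<times> (real^'n) \<Rightarrow> real) \<Rightarrow> real^'s \<Rightarrow> real^'n \<Rightarrow> real^'n" where
  "grad_p C q p = (\<chi> i. frechet_derivative C (at (q, p)) (0, axis i 1))"

text \<open>Casimir condition  [grad_q^T  grad_p^T] J = 0  with
  J = [[0, Bs^T], [-Bs, -Bd R Bd^T]], written out blockwise.\<close>
definition casimir ::
  "real^'s^'n \<Rightarrow> real^'d^'n \<Rightarrow> real^'d^'d \<Rightarrow> ((real^'s) \<times> (real^'n) \<Rightarrow> real) \<Rightarrow> bool" where
  "casimir Bs Bd R C \<longleftrightarrow>
     (\<forall>q p. - (grad_p C q p v* Bs) = 0 \<and>
            grad_q C q p v* transpose Bs - grad_p C q p v* (Bd ** R ** transpose Bd) = 0)"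

end

theory Submission
  imports Defs
begin

lemma key:
  fixes Bs :: "real^'s^'n" and Bd :: "real^'d^'n" and R :: "real^'d^'d"
    and g :: "real^'n" and h :: "real^'s"
  assumes K: "{x. transpose Bs *v x = 0} \<inter> {x. transpose Bd *v x = 0} = span {vec 1}"
    and D: "\<forall>i j. i \<noteq> j \<longrightarrow> R $ i $ j = 0" and P: "\<forall>i. R $ i $ i > 0"
  shows "(- (g v* Bs) = 0 \<and> h v* transpose Bs - g v* (Bd ** R ** transpose Bd) = 0)
     \<longleftrightarrow> (g \<in> span {vec 1} \<and> Bs *v h = 0)"
proof
  assume A: "- (g v* Bs) = 0 \<and> h v* transpose Bs - g v* (Bd ** R ** transpose Bd) = 0"
  hence gs: "g v* Bs = 0" by simp
  have e: "Bs *v h = g v* (Bd ** R ** transpose Bd)" using A by simp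
  define y where "y = g v* Bd"
  have Ry: "y v* R = (\<chi> i. R$i$i * y$i)"
  proof -
    have "\<And>i. (\<Sum>j\<in>UNIV. y$j * R$j$i) = R$i$i * y$i"
    proof -
      fix i
      have "(\<Sum>j\<in>UNIV. y$j * R$j$i) = (\<Sum>j\<in>UNIV. if j = i then R$i$i * y$i else 0)"
        by (rule sum.cong) (auto simp: D)
      thus "(\<Sum>j\<in>UNIV. y$j * R$j$i) = R$i$i * y$i" by simp
    qed
    thus ?thesis unfolding vector_matrix_mult_def by (simp add: vec_eq_iff)
  qed
  have "inner g (Bs *v h) = inner (g v* Bs) h" by (simp add: dot_lmul_matrix)
  hence "0 = inner g (g v* (Bd ** R ** transpose Bd))" using gs e by simp
  also have "g v* (Bd ** R ** transpose Bd) = Bd *v (y v* R)"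
  proof -
    have "g v* (Bd ** R ** transpose Bd) = ((g v* Bd) v* R) v* transpose Bd"
      by (simp only: vector_matrix_mul_assoc)
    also have "\<dots> = Bd *v ((g v* Bd) v* R)" by (rule vector_transpose_matrix)
    finally show ?thesis unfolding y_def .
  qed
  also have "inner g (Bd *v (y v* R)) = inner y (y v* R)"
    unfolding y_def by (simp add: dot_lmul_matrix)
  also have "\<dots> = (\<Sum>i\<in>UNIV. R$i$i * (y$i)^2)"
    by (simp add: Ry inner_vec_def power2_eq_square mult_ac)
  finally have s: "(\<Sum>i\<in>UNIV. R$i$i * (y$i)^2) = 0" by simp
  have "\<forall>i\<in>UNIV. R$i$i * (y$i)^2 = 0"
    using sum_nonneg_eq_0_iff[of UNIV "\<lambda>i. R$i$i * (y$i)^2"] s P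
    by (simp add: less_imp_le)
  hence "y = 0" using P by (simp add: vec_eq_iff) (metis less_irrefl)
  hence gk: "g \<in> span {vec 1}" using K gs y_def by auto
  hence "g v* Bd = 0" using K by auto
  hence "Bs *v h = 0" using e by (simp add: vector_matrix_mul_assoc[symmetric])
  thus "g \<in> span {vec 1} \<and> Bs *v h = 0" using gk by simp
next
  assume B: "g \<in> span {vec 1} \<and> Bs *v h = 0"
  hence "g v* Bs = 0" "g v* Bd = 0" using K by auto
  thus "- (g v* Bs) = 0 \<and> h v* transpose Bs - g v* (Bd ** R ** transpose Bd) = 0"
    using B by (simp add: vector_matrix_mul_assoc[symmetric])
qed

theorem proposition4p2:
  fixes Bs :: "real^'s^'n" and Bd :: "real^'d^'n" and R :: "real^'d^'d"
    and C :: "(real^'s) \<times> (real^'n) \<Rightarrow> real"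
  assumes "incidence_matrix Bs" and "incidence_matrix Bd"
    and "{x. transpose Bs *v x = 0} \<inter> {x. transpose Bd *v x = 0} = span {vec 1}"
    and "\<forall>i j. i \<noteq> j \<longrightarrow> R $ i $ j = 0" and "\<forall>i. R $ i $ i > 0"
    and "\<forall>x. C differentiable (at x)"
  shows "casimir Bs Bd R C \<longleftrightarrow>
         (\<forall>q p. grad_p C q p \<in> span {vec 1} \<and> Bs *v grad_q C q p = 0)"
  unfolding casimir_def using key[OF assms(3,4,5)] by blast

end
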